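(* Suppose Assumptions (A3) and (A6) hold. Let $\alpha_0\in(0,\alpha]$ and $c_2\in(0,\infty)$ be such that $\int e^{\alpha_1D_1(z)}\theta(dz)\le e^{c_2\alpha_1}$ for all $\alpha_1\in[0,\alpha_0]$. Let $\gamma_0\in(0,a_0)$ and $\delta\in\big[0,\min\{a_0-\gamma_0,\frac{1-e^{-\omega}}{2M}\}\big)$. Then for all $\alpha_1\in[0,\alpha_0]$, $$\sup_{n\ge0}\sup_{N\ge1}E\,e^{\alpha_1|X_n^{1,N}|}<\infty .$$
   Context: Setting. Fix integers $d,m\ge1$, a real $d\times d$ matrix $A$ with operator norm $\|A\|$, $\delta\ge0$, a Borel probability measure $\theta$ on $\mathbb{R}^m$, and a measurable $f:\mathbb{R}^d\times\mathcal{P}_1(\mathbb{R}^d)\times\mathbb{R}^m\to\mathbb{R}^d$. $\mathcal{P}_1(\mathbb{R}^d)$: Borel probability measures on $\mathbb{R}^d$ with finite first moment, with the Wasserstein-1 distance $\mathcal{W}_1(\mu,\nu)=\inf E|X-Y|$ over couplings. Particle system: for each $N\ge1$, $\{X_0^{i,N}\}_{i=1}^N$ are exchangeable, each with law $\mu_0\in\mathcal{P}_1(\mathbb{R}^d)$; $\{\epsilon_n^i\}_{i,n\ge1}$ i.i.d. with law $\theta$, independent of the initial conditions; $X_{n+1}^{i,N}=AX_n^{i,N}+\delta f(X_n^{i,N},\mu_n^N,\epsilon_{n+1}^i)$, $\mu_n^N=\frac1N\sum_{i=1}^N\delta_{X_n^{i,N}}$. $D(z):=\sup\frac{|f(x_1,\mu_1,z)-f(x_2,\mu_2,z)|}{|x_1-x_2|+\mathcal{W}_1(\mu_1,\mu_2)}$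 (supremum over $(x_1,\mu_1)\neq(x_2,\mu_2)$), $D_1(z):=|f(0,\delta_0,z)|$, $\sigma:=\int D\,d\theta$, $a_0:=\frac{1-e^{-\omega}}{2\sigma}$. (A3): $\|A\|\le e^{-\omega}$ for some $\omega>0$. (A6): (i) for some $M\in(1,\infty)$, $D(z)\le M$ for $\theta$-a.e. $z$; (ii) there is $\alpha>0$ with $\int e^{\alpha|x|}\mu_0(dx)<\infty$ and $\int e^{\alpha D_1(z)}\theta(dz)<\infty$. *)

theory Defs
  imports "HOL-Probability.Probability" "HOL-Combinatorics.Permutations"
begin

definition P1 :: "(real^'d) measure set" where
  "P1 = {\<mu>. prob_space \<mu> \<and> sets \<mu> = sets borel \<and> integrable \<mu> (\<lambda>x. norm x)}"

definition couplings :: "(real^'d) measure \<Rightarrow> (real^'d) measure \<Rightarrow> ((real^'d) \<times> (real^'d)) measure set" where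
  "couplings \<mu> \<nu> = {\<pi>. prob_space \<pi> \<and> sets \<pi> = sets (borel \<Otimes>\<^sub>M borel)
      \<and> distr \<pi> borel fst = \<mu> \<and> distr \<pi> borel snd = \<nu>}"

definition W1 :: "(real^'d) measure \<Rightarrow> (real^'d) measure \<Rightarrow> real" where
  "W1 \<mu> \<nu> = enn2real (INF \<pi>\<in>couplings \<mu> \<nu>. \<integral>\<^sup>+ p. ennreal (dist (fst p) (snd p)) \<partial>\<pi>)"

definition Dlip :: "(real^'d \<Rightarrow> (real^'d) measure \<Rightarrow> 'z \<Rightarrow> real^'d) \<Rightarrow> 'z \<Rightarrow> ennreal" where
  "Dlip f z = (SUP p \<in> {((x1,\<mu>1),(x2,\<mu>2)). \<mu>1 \<in> P1 \<and> \<mu>2 \<in> P1 \<and> (x1,\<mu>1) \<noteq> (x2,\<mu>2)}.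
      ennreal (norm (f (fst (fst p)) (snd (fst p)) z - f (fst (snd p)) (snd (snd p)) z)
               / (dist (fst (fst p)) (fst (snd p)) + W1 (snd (fst p)) (snd (snd p)))))"

definition D1 :: "(real^'d \<Rightarrow> (real^'d) measure \<Rightarrow> 'z \<Rightarrow> real^'d) \<Rightarrow> 'z \<Rightarrow> real" where
  "D1 f z = norm (f 0 (return borel 0) z)"

definition sigma :: "(real^'d \<Rightarrow> (real^'d) measure \<Rightarrow> 'z \<Rightarrow> real^'d) \<Rightarrow> 'z measure \<Rightarrow> ennreal" where
  "sigma f \<theta> = (\<integral>\<^sup>+ z. Dlip f z \<partial>\<theta>)"

definition a0 :: "real \<Rightarrow> (real^'d \<Rightarrow> (real^'d) measure \<Rightarrow> 'z \<Rightarrow> real^'d) \<Rightarrow> 'z measure \<Rightarrow> ereal" where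
  "a0 \<omega> f \<theta> = (if sigma f \<theta> = 0 then \<infinity>
                 else ereal ((1 - exp (-\<omega>)) / (2 * enn2real (sigma f \<theta>))))"

text \<open>Empirical measure (1/N) sum_{i=1}^N delta_{x_i}.\<close>
definition empirical :: "nat \<Rightarrow> (nat \<Rightarrow> real^'d) \<Rightarrow> (real^'d) measure" where
  "empirical N xs = distr (uniform_count_measure {1..N}) borel xs"

primrec particle ::
  "real^'d^'d \<Rightarrow> real \<Rightarrow> (real^'d \<Rightarrow> (real^'d) measure \<Rightarrow> 'z \<Rightarrow> real^'d)
   \<Rightarrow> (nat \<Rightarrow> nat \<Rightarrow> 'a \<Rightarrow> real^'d) \<Rightarrow> (nat \<Rightarrow> nat \<Rightarrow> 'a \<Rightarrow> 'z)
   \<Rightarrow> nat \<Rightarrow> nat \<Rightarrow> nat \<Rightarrow> 'a \<Rightarrow> real^'d" where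
  "particle A \<delta> f X0 eps N 0 i \<omega> = X0 N i \<omega>"
| "particle A \<delta> f X0 eps N (Suc n) i \<omega> =
     A *v particle A \<delta> f X0 eps N n i \<omega>
     + \<delta> *\<^sub>R f (particle A \<delta> f X0 eps N n i \<omega>)
                (empirical N (\<lambda>j. particle A \<delta> f X0 eps N n j \<omega>)) (eps i (Suc n) \<omega>)"

end

theory Submission
  imports Defs
begin


lemma emp_meas_xs: "xs \<in> measurable (uniform_count_measure {1..N}) (borel :: (real^'d) measure)"
  by (simp add: measurable_cong_sets[OF sets_uniform_count_measure_count_space refl])

lemma emp_prob: "N \<ge> 1 \<Longrightarrow> prob_space (empirical N (xs :: nat \<Rightarrow> real^'d))"
  unfolding empirical_def
  by (intro prob_space.prob_space_distr prob_space_uniform_count_measure emp_meas_xs) auto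

lemma emp_sets[simp]: "sets (empirical N xs) = sets borel"
  unfolding empirical_def by simp

lemma emp_space[simp]: "space (empirical N xs) = UNIV"
  unfolding empirical_def by simp

lemma emp_nn: 
  assumes "g \<in> borel_measurable (borel :: (real^'d) measure)"
  shows "(\<integral>\<^sup>+ x. g x \<partial>empirical N (xs :: nat \<Rightarrow> real^'d)) = (\<Sum>j\<in>{1..N}. ennreal (1 / real N) * g (xs j))"
proof -
  have "(\<integral>\<^sup>+ x. g x \<partial>empirical N xs) = (\<integral>\<^sup>+ j. g (xs j) \<partial>uniform_count_measure {1..N})"
    unfolding empirical_def
    by (rule nn_integral_distr[OF emp_meas_xs]) (simp add: measurable_cong_sets[OF sets_distr refl] assms)
  also have "\<dots> = (\<Sum>j\<in>{1..N}. ennreal (1 / real N) * g (xs j))"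
    unfolding uniform_count_measure_def
    by (subst nn_integral_point_measure_finite) auto
  finally show ?thesis .
qed

lemma emp_P1: "N \<ge> 1 \<Longrightarrow> empirical N (xs :: nat \<Rightarrow> real^'d) \<in> P1"
proof -
  assume N: "N \<ge> 1"
  have "(\<integral>\<^sup>+ x. ennreal (norm x) \<partial>empirical N xs) = (\<Sum>j\<in>{1..N}. ennreal (1 / real N) * ennreal (norm (xs j)))"
    by (rule emp_nn) simp
  also have "\<dots> < \<infinity>" by (simp add: ennreal_mult_less_top)
  finally have "(\<integral>\<^sup>+ x. ennreal (norm x) \<partial>empirical N xs) < \<infinity>" .
  then have "integrable (empirical N xs) (\<lambda>x. norm x)"
    by (intro integrableI_bounded) (auto simp: measurable_cong_sets[OF emp_sets refl])
  then show ?thesis using emp_prob[OF N] unfolding P1_def by auto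
qed

lemma ret_P1: "return borel (0::real^'d) \<in> P1"
  unfolding P1_def by (auto simp: prob_space_return nn_integral_return intro!: integrableI_bounded)



lemma W1_ret0:
  assumes mu: "\<mu> \<in> P1"
  shows "W1 \<mu> (return borel (0::real^'d)) = enn2real (\<integral>\<^sup>+ x. ennreal (norm x) \<partial>\<mu>)"
proof -
  interpret prob_space \<mu> using mu by (simp add: P1_def)
  have sm: "sets \<mu> = sets borel" using mu by (simp add: P1_def)
  note msm = measurable_cong_sets[OF sm refl]
  define I where "I = (\<integral>\<^sup>+ x. ennreal (norm x) \<partial>\<mu>)"
  define \<pi>0 where "\<pi>0 = distr \<mu> (borel \<Otimes>\<^sub>M borel) (\<lambda>x::real^'d. (x, 0::real^'d))"
  have gm: "(\<lambda>x::real^'d. (x, 0::real^'d)) \<in> measurable \<mu> (borel \<Otimes>\<^sub>M borel)"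
    unfolding msm by measurable
  have c0: "\<pi>0 \<in> couplings \<mu> (return borel 0)"
  proof -
    have "prob_space \<pi>0" unfolding \<pi>0_def by (rule prob_space_distr[OF gm])
    moreover have "sets \<pi>0 = sets (borel \<Otimes>\<^sub>M borel)" unfolding \<pi>0_def by simp
    moreover have "distr \<pi>0 borel fst = \<mu>"
    proof -
      have "distr \<pi>0 borel fst = distr \<mu> borel (\<lambda>x. fst (x, 0::real^'d))"
        unfolding \<pi>0_def by (subst distr_distr) (auto intro: gm simp: comp_def)
      also have "\<dots> = distr \<mu> borel (\<lambda>x. x)" by simp
      also have "\<dots> = \<mu>" by (rule distr_id2) (simp add: sm)
      finally show ?thesis .
    qed
    moreover have "distr \<pi>0 borel snd = return borel 0"
    proof -
      have "distr \<pi>0 borel snd = distr \<mu> borel (\<lambda>x. snd (x, 0::real^'d))"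
        unfolding \<pi>0_def by (subst distr_distr) (auto intro: gm simp: comp_def)
      also have "\<dots> = distr \<mu> borel (\<lambda>x. 0::real^'d)" by simp
      also have "\<dots> = return borel 0" by simp
      finally show ?thesis .
    qed
    ultimately show ?thesis unfolding couplings_def by auto
  qed
  have v0: "(\<integral>\<^sup>+ p. ennreal (dist (fst p) (snd p)) \<partial>\<pi>0) = I"
    unfolding \<pi>0_def I_def
    by (subst nn_integral_distr[OF gm]) (auto simp: dist_norm)
  have lb: "I \<le> (\<integral>\<^sup>+ p. ennreal (dist (fst p) (snd p)) \<partial>\<pi>)" if pi: "\<pi> \<in> couplings \<mu> (return borel 0)" for \<pi>
  proof -
    have sp: "sets \<pi> = sets (borel \<Otimes>\<^sub>M borel)" and d1: "distr \<pi> borel fst = \<mu>"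
      and d2: "distr \<pi> borel snd = return borel (0::real^'d)"
      using pi unfolding couplings_def by auto
    note msp = measurable_cong_sets[OF sp refl]
    have mfst: "fst \<in> measurable \<pi> (borel :: (real^'d) measure)" unfolding msp by measurable
    have msnd: "snd \<in> measurable \<pi> (borel :: (real^'d) measure)" unfolding msp by measurable
    have "I = (\<integral>\<^sup>+ x. ennreal (norm x) \<partial>distr \<pi> borel fst)" unfolding I_def d1 ..
    also have "\<dots> = (\<integral>\<^sup>+ p. ennreal (norm (fst p)) \<partial>\<pi>)"
      by (rule nn_integral_distr[OF mfst]) simp
    also have "\<dots> \<le> (\<integral>\<^sup>+ p. ennreal (dist (fst p) (snd p)) + ennreal (norm (snd p)) \<partial>\<pi>)"
    proof (rule nn_integral_mono)
      fix p :: "(real^'d) \<times> (real^'d)"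
      have "norm (fst p) \<le> dist (fst p) (snd p) + norm (snd p)"
        using norm_triangle_ineq[of "fst p - snd p" "snd p"] by (simp add: dist_norm)
      then show "ennreal (norm (fst p)) \<le> ennreal (dist (fst p) (snd p)) + ennreal (norm (snd p))"
        by (simp add: ennreal_plus[symmetric] del: ennreal_plus)
    qed
    also have "\<dots> = (\<integral>\<^sup>+ p. ennreal (dist (fst p) (snd p)) \<partial>\<pi>) + (\<integral>\<^sup>+ p. ennreal (norm (snd p)) \<partial>\<pi>)"
      by (rule nn_integral_add) (auto simp: msp)
    also have "(\<integral>\<^sup>+ p. ennreal (norm (snd p)) \<partial>\<pi>) = (\<integral>\<^sup>+ x. ennreal (norm x) \<partial>distr \<pi> borel snd)"
      by (rule nn_integral_distr[OF msnd, symmetric]) simp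
    also have "\<dots> = 0" unfolding d2 by (simp add: nn_integral_return)
    finally show ?thesis by simp
  qed
  have "(INF \<pi>\<in>couplings \<mu> (return borel 0). \<integral>\<^sup>+ p. ennreal (dist (fst p) (snd p)) \<partial>\<pi>) = I"
  proof (rule antisym)
    show "(INF \<pi>\<in>couplings \<mu> (return borel 0). \<integral>\<^sup>+ p. ennreal (dist (fst p) (snd p)) \<partial>\<pi>) \<le> I"
      by (rule INF_lower2[OF c0]) (simp add: v0)
    show "I \<le> (INF \<pi>\<in>couplings \<mu> (return borel 0). \<integral>\<^sup>+ p. ennreal (dist (fst p) (snd p)) \<partial>\<pi>)"
      using lb by (rule INF_greatest)
  qed
  then show ?thesis unfolding W1_def I_def by simp
qed



lemma emp_norm_int:
  assumes "N \<ge> 1"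
  shows "W1 (empirical N xs) (return borel (0::real^'d)) = (\<Sum>j\<in>{1..N}. norm (xs j)) / real N"
proof -
  have "(\<integral>\<^sup>+ x. ennreal (norm x) \<partial>empirical N xs) = (\<Sum>j\<in>{1..N}. ennreal (1 / real N) * ennreal (norm (xs j)))"
    by (rule emp_nn) simp
  also have "\<dots> = ennreal ((\<Sum>j\<in>{1..N}. norm (xs j)) / real N)"
    by (simp add: ennreal_mult[symmetric] sum_divide_distrib)
  finally have e: "(\<integral>\<^sup>+ x. ennreal (norm x) \<partial>empirical N xs) = ennreal ((\<Sum>j\<in>{1..N}. norm (xs j)) / real N)" .
  have nn: "0 \<le> (\<Sum>j\<in>{1..N}. norm (xs j)) / real N" by (auto intro!: divide_nonneg_nonneg sum_nonneg)
  show ?thesis using W1_ret0[OF emp_P1[OF assms], of xs] e nn by simp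
qed

lemma emp_zero:
  assumes "N \<ge> 1" "\<And>j. j \<in> {1..N} \<Longrightarrow> xs j = (0::real^'d)"
  shows "empirical N xs = return borel 0"
proof -
  interpret prob_space "uniform_count_measure {1..N}"
    using assms by (intro prob_space_uniform_count_measure) auto
  have "empirical N xs = distr (uniform_count_measure {1..N}) borel (\<lambda>_. 0::real^'d)"
    unfolding empirical_def by (rule distr_cong) (auto simp: space_uniform_count_measure assms)
  also have "\<dots> = return borel 0" by (rule distr_const) simp
  finally show ?thesis .
qed

lemma f_bound:
  fixes f :: "real^'d \<Rightarrow> (real^'d) measure \<Rightarrow> 'z \<Rightarrow> real^'d"
  assumes Dz: "Dlip f z \<le> ennreal Mc" and Mc: "Mc \<ge> 0" and N: "N \<ge> 1"
  shows "norm (f x (empirical N xs) z) \<le> Mc * (norm x + (\<Sum>j\<in>{1..N}. norm (xs j)) / real N) + D1 f z"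
proof -
  define \<mu> where "\<mu> = empirical N xs"
  define avg where "avg = (\<Sum>j\<in>{1..N}. norm (xs j)) / real N"
  have W: "W1 \<mu> (return borel 0) = avg" unfolding \<mu>_def avg_def by (rule emp_norm_int[OF N])
  have avg0: "avg \<ge> 0" unfolding avg_def by (auto intro!: sum_nonneg divide_nonneg_nonneg)
  have key: "norm (f x \<mu> z - f 0 (return borel 0) z) \<le> Mc * (norm x + avg)"
  proof (cases "(x, \<mu>) = (0, return borel 0)")
    case True then show ?thesis using Mc avg0 by simp
  next
    case False
    let ?S = "{((x1,\<mu>1),(x2,\<mu>2)). \<mu>1 \<in> P1 \<and> \<mu>2 \<in> P1 \<and> (x1,\<mu>1) \<noteq> (x2,\<mu>2)} :: (((real^'d) \<times> (real^'d) measure) \<times> ((real^'d) \<times> (real^'d) measure)) set"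
    have mem: "((x, \<mu>), (0, return borel 0)) \<in> ?S"
      using False emp_P1[OF N] ret_P1 unfolding \<mu>_def by auto
    have "ennreal (norm (f x \<mu> z - f 0 (return borel 0) z) / (dist x 0 + W1 \<mu> (return borel 0))) \<le> Dlip f z"
      unfolding Dlip_def by (rule SUP_upper2[OF mem]) simp
    also have "\<dots> \<le> ennreal Mc" by (rule Dz)
    finally have r: "norm (f x \<mu> z - f 0 (return borel 0) z) / (norm x + avg) \<le> Mc"
      using Mc W by (simp add: ennreal_le_iff dist_norm)
    show ?thesis
    proof (cases "norm x + avg > 0")
      case True then show ?thesis using r by (simp add: divide_le_eq mult.commute)
    next
      case F2: False
      then have "norm x = 0" "avg = 0" using avg0 norm_ge_zero[of x] by linarith+
      then have x0: "x = 0" by simp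
      have "(\<Sum>j\<in>{1..N}. norm (xs j)) = 0" using \<open>avg = 0\<close> N unfolding avg_def by simp
      then have "\<forall>j\<in>{1..N}. norm (xs j) = 0" by (subst (asm) sum_nonneg_eq_0_iff) auto
      then have "\<mu> = return borel 0" unfolding \<mu>_def by (intro emp_zero N) auto
      then show ?thesis using False x0 by simp
    qed
  qed
  have "norm (f x \<mu> z) \<le> norm (f x \<mu> z - f 0 (return borel 0) z) + norm (f 0 (return borel 0) z)"
    using norm_triangle_ineq[of "f x \<mu> z - f 0 (return borel 0) z" "f 0 (return borel 0) z"] by simp
  then show ?thesis using key unfolding D1_def \<mu>_def avg_def by simp
qed



lemma sa_Int_stable: "sigma_algebra \<Omega> S \<Longrightarrow> Int_stable S"
  by (intro algebra.Int_stable sigma_algebra.axioms(1))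

lemma (in prob_space) indep_set_mono:
  "indep_set A B \<Longrightarrow> A' \<subseteq> A \<Longrightarrow> B' \<subseteq> B \<Longrightarrow> indep_set A' B'"
  unfolding indep_set_def by (rule indep_sets_mono_sets) (auto split: bool.split)

lemma (in prob_space) indep_combine:
  assumes init: "indep_set SX SE" and saX: "sigma_algebra (space M) SX" and saE: "sigma_algebra (space M) SE"
    and T0: "T0 \<subseteq> SE" and T1: "T1 \<subseteq> SE" and i01: "indep_set T0 T1"
    and sa0: "sigma_algebra (space M) T0" and st1: "Int_stable T1"
  shows "indep_set (sigma_sets (space M) {a \<inter> b | a b. a \<in> SX \<and> b \<in> T0}) (sigma_sets (space M) T1)"
proof (rule indep_set_sigma_sets)
  have evX: "SX \<subseteq> events" and evE: "SE \<subseteq> events" using init by (auto simp: indep_sets2_eq)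
  show "indep_set {a \<inter> b | a b. a \<in> SX \<and> b \<in> T0} T1"
  proof (rule indep_setI)
    show "{a \<inter> b | a b. a \<in> SX \<and> b \<in> T0} \<subseteq> events" using evX evE T0 by auto
    show "T1 \<subseteq> events" using T1 evE by auto
  next
    fix h c assume h: "h \<in> {a \<inter> b | a b. a \<in> SX \<and> b \<in> T0}" and c: "c \<in> T1"
    then obtain a b where ab: "h = a \<inter> b" "a \<in> SX" "b \<in> T0" by auto
    have bc: "b \<inter> c \<in> SE" using ab c T0 T1 by (intro Int_stableD[OF sa_Int_stable[OF saE]]) auto
    have "prob (h \<inter> c) = prob (a \<inter> (b \<inter> c))" using ab by (simp add: Int_assoc)
    also have "\<dots> = prob a * prob (b \<inter> c)" using indep_setD[OF init ab(2) bc] .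
    also have "prob (b \<inter> c) = prob b * prob c" using indep_setD[OF i01 ab(3) c] .
    also have "prob h = prob a * prob b" using indep_setD[OF init ab(2)] T0 ab by auto
    ultimately show "prob (h \<inter> c) = prob h * prob c" by simp
  qed
  show "Int_stable {a \<inter> b | a b. a \<in> SX \<and> b \<in> T0}"
  proof (rule Int_stableI)
    fix x y assume "x \<in> {a \<inter> b | a b. a \<in> SX \<and> b \<in> T0}" "y \<in> {a \<inter> b | a b. a \<in> SX \<and> b \<in> T0}"
    then obtain a b a' b' where "x = a \<inter> b" "a \<in> SX" "b \<in> T0" "y = a' \<inter> b'" "a' \<in> SX" "b' \<in> T0" by auto
    moreover have "a \<inter> a' \<in> SX" using \<open>a \<in> SX\<close> \<open>a' \<in> SX\<close> by (rule Int_stableD[OF sa_Int_stable[OF saX]])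
    moreover have "b \<inter> b' \<in> T0" using \<open>b \<in> T0\<close> \<open>b' \<in> T0\<close> by (rule Int_stableD[OF sa_Int_stable[OF sa0]])
    moreover have "x \<inter> y = (a \<inter> a') \<inter> (b \<inter> b')" using calculation by auto
    ultimately show "x \<inter> y \<in> {a \<inter> b | a b. a \<in> SX \<and> b \<in> T0}" by blast
  qed
  show "Int_stable T1" by (rule st1)
qed

lemma (in prob_space) indep_factor:
  fixes u v :: "'a \<Rightarrow> ennreal"
  assumes ind: "indep_set S T" and saS: "sigma_algebra (space M) S" and saT: "sigma_algebra (space M) T"
    and um: "u \<in> borel_measurable M" and vm: "v \<in> borel_measurable M"
    and uS: "\<And>A. A \<in> sets borel \<Longrightarrow> u -` A \<inter> space M \<in> S"
    and vT: "\<And>A. A \<in> sets borel \<Longrightarrow> v -` A \<inter> space M \<in> T"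
  shows "(\<integral>\<^sup>+ \<omega>. u \<omega> * v \<omega> \<partial>M) = (\<integral>\<^sup>+ \<omega>. u \<omega> \<partial>M) * (\<integral>\<^sup>+ \<omega>. v \<omega> \<partial>M)"
proof -
  have iv: "indep_var borel u borel v"
    unfolding indep_var_eq
  proof (intro conjI)
    show "random_variable borel u" "random_variable borel v" using um vm by auto
    show "indep_set (sigma_sets (space M) {u -` A \<inter> space M |A. A \<in> sets borel})
        (sigma_sets (space M) {v -` A \<inter> space M |A. A \<in> sets borel})"
      by (rule indep_set_mono[OF ind]; intro sigma_algebra.sigma_sets_subset[OF saS] sigma_algebra.sigma_sets_subset[OF saT]; auto intro: uS vT)
  qed
  have iv2: "indep_vars (\<lambda>_. borel) (case_bool u v) UNIV"
    using iv unfolding indep_var_def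
    by (rule indep_vars_cong[THEN iffD1, rotated -1]) (auto split: bool.split)
  have "(\<integral>\<^sup>+ \<omega>. (\<Prod>i\<in>UNIV. case_bool u v i \<omega>) \<partial>M) = (\<Prod>i\<in>UNIV. \<integral>\<^sup>+ \<omega>. case_bool u v i \<omega> \<partial>M)"
    by (rule indep_vars_nn_integral[OF _ iv2]) auto
  then show ?thesis by (simp add: UNIV_bool mult.commute)
qed



lemma young_exp:
  fixes C \<rho> t :: real
  assumes C: "C \<ge> 1" and r: "0 < \<rho>" "\<rho> < 1" and t: "t \<ge> 0"
  shows "exp (\<rho> * t) \<le> exp t / (2 * C) + exp (\<rho> * (ln (2 * C) / (1 - \<rho>)))"
proof (cases "t \<ge> ln (2 * C) / (1 - \<rho>)")
  case True
  then have "(1 - \<rho>) * t \<ge> ln (2 * C)" using r by (simp add: field_simps)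
  then have "exp ((1 - \<rho>) * t) \<ge> 2 * C" using C by (metis exp_le_cancel_iff exp_ln mult_pos_pos order_less_le_trans zero_less_one zero_less_numeral)
  then have "exp (\<rho> * t) * (2 * C) \<le> exp (\<rho> * t) * exp ((1 - \<rho>) * t)"
    by (intro mult_left_mono) auto
  also have "\<dots> = exp t" by (simp add: exp_add[symmetric] algebra_simps)
  finally have "exp (\<rho> * t) \<le> exp t / (2 * C)" using C by (simp add: field_simps)
  then show ?thesis by (smt (verit) exp_gt_zero)
next
  case False
  then have "\<rho> * t \<le> \<rho> * (ln (2 * C) / (1 - \<rho>))" using r by (intro mult_left_mono) auto
  then show ?thesis using C by (smt (verit) divide_nonneg_pos exp_gt_zero exp_le_cancel_iff)
qed

lemma exp_convex2:
  fixes a b s t :: real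
  assumes "a \<ge> 0" "b \<ge> 0" "a + b = 1"
  shows "exp (a * s + b * t) \<le> a * exp s + b * exp t"
proof -
  have "exp ((1 - b) *\<^sub>R s + b *\<^sub>R t) \<le> (1 - b) * exp s + b * exp t"
    using assms by (intro convex_onD[OF exp_convex]) auto
  moreover have "a = 1 - b" using assms by simp
  ultimately show ?thesis by simp
qed

lemma exp_jensen_avg:
  fixes y :: "nat \<Rightarrow> real"
  assumes N: "N \<ge> 1"
  shows "exp ((\<Sum>j\<in>{1..N}. y j) / real N) \<le> (\<Sum>j\<in>{1..N}. exp (y j)) / real N"
proof -
  have "exp (\<Sum>j\<in>{1..N}. (1 / real N) * y j) \<le> (\<Sum>j\<in>{1..N}. (1 / real N) * exp (y j))"
    using convex_on_sum[OF _ _ exp_convex, of "{1..N}" "\<lambda>_. 1 / real N" y] N by simp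
  then show ?thesis by (simp add: sum_divide_distrib[symmetric] sum_distrib_left[symmetric])
qed



lemma pointwise:
  fixes x :: "real^'d" and xs :: "nat \<Rightarrow> real^'d" and s D \<beta> a b \<rho> \<eta> K \<delta> :: real
  assumes N: "N \<ge> 1" and s: "s \<le> a * norm x + b * ((\<Sum>j\<in>{1..N}. norm (xs j)) / real N) + \<delta> * D"
    and ab: "a \<ge> 0" "b \<ge> 0" "a + b = \<rho>" "\<rho> > 0" and \<beta>: "\<beta> \<ge> 0"
    and Y: "\<And>t. t \<ge> 0 \<Longrightarrow> exp (\<rho> * t) \<le> \<eta> * exp t + K" and \<eta>: "\<eta> \<ge> 0"
  shows "exp (\<beta> * s) \<le> (\<eta> * ((a/\<rho>) * exp (\<beta> * norm x) + (b/\<rho>) * ((\<Sum>j\<in>{1..N}. exp (\<beta> * norm (xs j))) / real N)) + K) * exp (\<beta> * \<delta> * D)"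
proof -
  define avg where "avg = (\<Sum>j\<in>{1..N}. norm (xs j)) / real N"
  have "exp (\<beta> * s) \<le> exp (\<beta> * (a * norm x + b * avg) + \<beta> * \<delta> * D)"
  proof (intro exp_mono)
    have "\<beta> * s \<le> \<beta> * (a * norm x + b * avg + \<delta> * D)"
      using mult_left_mono[OF s \<beta>] unfolding avg_def .
    then show "\<beta> * s \<le> \<beta> * (a * norm x + b * avg) + \<beta> * \<delta> * D" by (simp add: algebra_simps)
  qed
  also have "\<dots> = exp (\<beta> * (a * norm x + b * avg)) * exp (\<beta> * \<delta> * D)" by (simp add: exp_add)
  also have "exp (\<beta> * (a * norm x + b * avg)) \<le> (a/\<rho>) * exp (\<rho> * (\<beta> * norm x)) + (b/\<rho>) * exp (\<rho> * (\<beta> * avg))"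
  proof -
    have "\<beta> * (a * norm x + b * avg) = (a/\<rho>) * (\<rho> * (\<beta> * norm x)) + (b/\<rho>) * (\<rho> * (\<beta> * avg))"
      using ab by (simp add: field_simps)
    moreover have "(a/\<rho>) + (b/\<rho>) = 1" using ab by (simp add: field_simps)
    ultimately show ?thesis using ab by (metis exp_convex2 divide_nonneg_pos)
  qed
  also have "exp (\<rho> * (\<beta> * avg)) \<le> (\<Sum>j\<in>{1..N}. exp (\<rho> * (\<beta> * norm (xs j)))) / real N"
  proof -
    have "\<rho> * (\<beta> * avg) = (\<Sum>j\<in>{1..N}. \<rho> * (\<beta> * norm (xs j))) / real N"
      unfolding avg_def by (simp add: sum_distrib_left)
    then show ?thesis using exp_jensen_avg[OF N, of "\<lambda>j. \<rho> * (\<beta> * norm (xs j))"] by simp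
  qed
  also have "(\<Sum>j\<in>{1..N}. exp (\<rho> * (\<beta> * norm (xs j)))) \<le> (\<Sum>j\<in>{1..N}. \<eta> * exp (\<beta> * norm (xs j)) + K)"
    using \<beta> by (intro sum_mono Y) auto
  also have "exp (\<rho> * (\<beta> * norm x)) \<le> \<eta> * exp (\<beta> * norm x) + K" using \<beta> by (intro Y) auto
  finally have "exp (\<beta> * s) \<le> ((a/\<rho>) * (\<eta> * exp (\<beta> * norm x) + K) + (b/\<rho>) * ((\<Sum>j\<in>{1..N}. \<eta> * exp (\<beta> * norm (xs j)) + K) / real N)) * exp (\<beta> * \<delta> * D)"
    using ab by (simp add: mult_right_mono add_mono mult_left_mono divide_right_mono)
  also have "((a/\<rho>) * (\<eta> * exp (\<beta> * norm x) + K) + (b/\<rho>) * ((\<Sum>j\<in>{1..N}. \<eta> * exp (\<beta> * norm (xs j)) + K) / real N))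
     = \<eta> * ((a/\<rho>) * exp (\<beta> * norm x) + (b/\<rho>) * ((\<Sum>j\<in>{1..N}. exp (\<beta> * norm (xs j))) / real N)) + K"
  proof -
    have "(\<Sum>j\<in>{1..N}. \<eta> * exp (\<beta> * norm (xs j)) + K) = \<eta> * (\<Sum>j\<in>{1..N}. exp (\<beta> * norm (xs j))) + real N * K"
      by (simp add: sum.distrib sum_distrib_left)
    moreover have "(a/\<rho>) + (b/\<rho>) = 1" using ab by (simp add: field_simps)
    ultimately show ?thesis using N ab by (simp add: field_simps) (simp add: ab(3)[symmetric] algebra_simps)
  qed
  finally show ?thesis .
qed



lemma emp_measurable:
  fixes xs :: "'a \<Rightarrow> nat \<Rightarrow> real^'d"
  assumes N: "N \<ge> 1" and m: "\<And>k. k \<in> {1..N} \<Longrightarrow> (\<lambda>\<omega>. xs \<omega> k) \<in> borel_measurable Mx"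
  shows "(\<lambda>\<omega>. empirical N (xs \<omega>)) \<in> measurable Mx (restrict_space (subprob_algebra borel) P1)"
proof (rule measurable_restrict_space2)
  show "(\<lambda>\<omega>. empirical N (xs \<omega>)) \<in> space Mx \<rightarrow> P1" using emp_P1[OF N] by auto
  show "(\<lambda>\<omega>. empirical N (xs \<omega>)) \<in> measurable Mx (subprob_algebra borel)"
  proof (rule measurable_subprob_algebra)
    fix a show "subprob_space (empirical N (xs a))"
      using emp_prob[OF N] by (rule prob_space_imp_subprob_space)
    show "sets (empirical N (xs a)) = sets borel" by simp
  next
    fix B :: "(real^'d) set" assume B: "B \<in> sets borel"
    have "(\<lambda>a. emeasure (empirical N (xs a)) B) = (\<lambda>a. \<Sum>j\<in>{1..N}. ennreal (1 / real N) * indicator B (xs a j))"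
    proof
      fix a
      have "emeasure (empirical N (xs a)) B = (\<integral>\<^sup>+ x. indicator B x \<partial>empirical N (xs a))"
        using B by (simp add: nn_integral_indicator)
      also have "\<dots> = (\<Sum>j\<in>{1..N}. ennreal (1 / real N) * indicator B (xs a j))"
        by (rule emp_nn) (use B in simp)
      finally show "emeasure (empirical N (xs a)) B = (\<Sum>j\<in>{1..N}. ennreal (1 / real N) * indicator B (xs a j))" .
    qed
    moreover have "(\<lambda>a. \<Sum>j\<in>{1..N}. ennreal (1 / real N) * indicator B (xs a j)) \<in> borel_measurable Mx"
    proof (intro borel_measurable_sum borel_measurable_times_ennreal borel_measurable_const)
      fix j assume "j \<in> {1..N}"
      then have mj: "(\<lambda>a. xs a j) \<in> borel_measurable Mx" by (rule m)
      show "(\<lambda>a. indicator B (xs a j) :: ennreal) \<in> borel_measurable Mx"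
        by (rule measurable_compose[OF mj borel_measurable_indicator[OF B]])
    qed
    ultimately show "(\<lambda>a. emeasure (empirical N (xs a)) B) \<in> borel_measurable Mx" by (simp only:)
  qed
qed

locale PS =
  fixes M :: "'a measure" and A :: "real^'d^'d" and \<delta> :: real
    and f :: "real^'d \<Rightarrow> (real^'d) measure \<Rightarrow> real^'m \<Rightarrow> real^'d"
    and X0 :: "nat \<Rightarrow> nat \<Rightarrow> 'a \<Rightarrow> real^'d"
    and eps :: "nat \<Rightarrow> nat \<Rightarrow> 'a \<Rightarrow> real^'m"
  assumes M: "prob_space M"
    and f_meas: "(\<lambda>(x, \<mu>, z). f x \<mu> z) \<in>
        measurable (borel \<Otimes>\<^sub>M (restrict_space (subprob_algebra borel) P1 \<Otimes>\<^sub>M borel)) borel"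
    and X0_meas: "\<And>N i. N \<ge> 1 \<Longrightarrow> i \<in> {1..N} \<Longrightarrow> X0 N i \<in> borel_measurable M"
    and eps_meas: "\<And>i n. i \<ge> 1 \<Longrightarrow> n \<ge> 1 \<Longrightarrow> eps i n \<in> borel_measurable M"
begin

sublocale prob_space M by (rule M)

definition G :: "nat \<Rightarrow> (nat \<times> nat) set \<Rightarrow> 'a set set" where
  "G N K = (\<Union>i\<in>{1..N}. {X0 N i -` B \<inter> space M | B. B \<in> sets (borel :: (real^'d) measure)})
     \<union> (\<Union>p\<in>K. {eps (fst p) (snd p) -` B \<inter> space M | B. B \<in> sets (borel :: (real^'m) measure)})"

lemma G_Pow: "G N K \<subseteq> Pow (space M)" unfolding G_def by auto

definition FF :: "nat \<Rightarrow> (nat \<times> nat) set \<Rightarrow> 'a measure" where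
  "FF N K = measure_of (space M) (G N K) (\<lambda>_. 0)"

lemma space_F[simp]: "space (FF N K) = space M"
  using G_Pow by (simp add: FF_def space_measure_of_conv)

lemma sets_F: "sets (FF N K) = sigma_sets (space M) (G N K)"
  using G_Pow by (simp add: FF_def sets_measure_of)

lemma meas_F:
  fixes g :: "'a \<Rightarrow> 'b::topological_space"
  assumes "\<And>B. B \<in> sets borel \<Longrightarrow> g -` B \<inter> space M \<in> G N K"
  shows "g \<in> borel_measurable (FF N K)"
  by (rule measurableI) (use assms in \<open>auto simp: sets_F\<close>)

lemma F_sub_M: "K \<subseteq> {1..} \<times> {1..} \<Longrightarrow> sets (FF N K) \<subseteq> sets M"
proof -
  assume KK: "K \<subseteq> {1..} \<times> {1..}"
  have "G N K \<subseteq> sets M"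
  proof
    fix S assume "S \<in> G N K"
    then consider (a) i B where "i \<in> {1..N}" "B \<in> sets (borel :: (real^'d) measure)" "S = X0 N i -` B \<inter> space M"
      | (b) p B where "p \<in> K" "B \<in> sets (borel :: (real^'m) measure)" "S = eps (fst p) (snd p) -` B \<inter> space M"
      unfolding G_def by blast
    then show "S \<in> sets M"
    proof cases
      case a then show ?thesis using X0_meas[of N i] by (auto simp: measurable_def)
    next
      case b then show ?thesis using eps_meas[of "fst p" "snd p"] KK by (auto simp: measurable_def)
    qed
  qed
  then show ?thesis unfolding sets_F by (rule sets.sigma_sets_subset)
qed

end


context PS begin

lemma particle_meas:
  "N \<ge> 1 \<Longrightarrow> {1..} \<times> {1..n} \<subseteq> K \<Longrightarrow> j \<in> {1..N} \<Longrightarrow>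
    (\<lambda>\<omega>. particle A \<delta> f X0 eps N n j \<omega>) \<in> borel_measurable (FF N K)"
proof (induction n arbitrary: j)
  case 0
  show ?case by (rule meas_F) (use 0 in \<open>auto simp: G_def\<close>)
next
  case (Suc n)
  have K: "{1..} \<times> {1..n} \<subseteq> K" using Suc.prems(2) by auto
  have ih: "(\<lambda>\<omega>. particle A \<delta> f X0 eps N n k \<omega>) \<in> borel_measurable (FF N K)" if "k \<in> {1..N}" for k
    using Suc.IH[OF Suc.prems(1) K that] .
  have emp: "(\<lambda>\<omega>. empirical N (\<lambda>k. particle A \<delta> f X0 eps N n k \<omega>)) \<in> measurable (FF N K) (restrict_space (subprob_algebra borel) P1)"
    by (rule emp_measurable[OF Suc.prems(1)]) (rule ih)
  have jK: "(j, Suc n) \<in> K" using Suc.prems by auto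
  have epsm: "eps j (Suc n) \<in> borel_measurable (FF N K)"
    by (rule meas_F) (use jK in \<open>auto simp: G_def\<close>)
  have pair: "(\<lambda>\<omega>. (particle A \<delta> f X0 eps N n j \<omega>, empirical N (\<lambda>k. particle A \<delta> f X0 eps N n k \<omega>), eps j (Suc n) \<omega>))
      \<in> measurable (FF N K) (borel \<Otimes>\<^sub>M (restrict_space (subprob_algebra borel) P1 \<Otimes>\<^sub>M borel))"
    by (intro measurable_Pair ih[OF Suc.prems(3)] emp epsm)
  have fm: "(\<lambda>\<omega>. f (particle A \<delta> f X0 eps N n j \<omega>) (empirical N (\<lambda>k. particle A \<delta> f X0 eps N n k \<omega>)) (eps j (Suc n) \<omega>))
      \<in> borel_measurable (FF N K)"
    using measurable_compose[OF pair f_meas] by simp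
  have am: "(\<lambda>\<omega>. A *v particle A \<delta> f X0 eps N n j \<omega>) \<in> borel_measurable (FF N K)"
    by (rule measurable_compose[OF ih[OF Suc.prems(3)] borel_measurable_continuous_onI[OF matrix_vector_mult_linear_continuous_on]])
  show ?case
    unfolding particle.simps
    by (intro borel_measurable_add am borel_measurable_scaleR borel_measurable_const fm)
qed

lemma particle_meas_M:
  assumes "N \<ge> 1" "j \<in> {1..N}"
  shows "(\<lambda>\<omega>. particle A \<delta> f X0 eps N n j \<omega>) \<in> borel_measurable M"
proof -
  have "(\<lambda>\<omega>. particle A \<delta> f X0 eps N n j \<omega>) \<in> borel_measurable (FF N ({1..} \<times> {1..n}))"
    by (rule particle_meas) (use assms in auto)
  moreover have "measurable (FF N ({1..} \<times> {1..n})) (borel :: (real^'d) measure) \<subseteq> measurable M borel"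
    by (rule measurable_mono) (use F_sub_M[of "{1..} \<times> {1..n}" N] in \<open>auto simp: subset_eq\<close>)
  ultimately show ?thesis by blast
qed

end


lemma vimage_comp_sets:
  assumes Y: "Y \<in> X \<rightarrow> space P" and h: "h \<in> measurable P Q" and g: "\<And>x. x \<in> X \<Longrightarrow> g x = h (Y x)"
    and B: "B \<in> sets Q"
  shows "g -` B \<inter> X \<in> sets (vimage_algebra X Y P)"
proof -
  have "(\<lambda>x. h (Y x)) \<in> measurable (vimage_algebra X Y P) Q"
    by (rule measurable_compose[OF measurable_vimage_algebra1[OF Y] h])
  then have "g \<in> measurable (vimage_algebra X Y P) Q"
    by (rule measurable_cong[THEN iffD1, rotated]) (simp add: g)
  from measurable_sets[OF this B] show ?thesis by simp
qed

lemma sa_vimage: "sigma_algebra X (sets (vimage_algebra X Y P))"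
  using sets.sigma_algebra_axioms[of "vimage_algebra X Y P"] by simp

locale PS2 = PS M A \<delta> f X0 eps
  for M :: "'a measure" and A :: "real^'d^'d" and \<delta> :: real
    and f :: "real^'d \<Rightarrow> (real^'d) measure \<Rightarrow> real^'m \<Rightarrow> real^'d"
    and X0 :: "nat \<Rightarrow> nat \<Rightarrow> 'a \<Rightarrow> real^'d"
    and eps :: "nat \<Rightarrow> nat \<Rightarrow> 'a \<Rightarrow> real^'m" +
  assumes eps_indep: "prob_space.indep_vars M (\<lambda>_. borel) (\<lambda>(i, n). eps i n) ({1..} \<times> {1..})"
    and indep_init: "\<And>N. N \<ge> 1 \<Longrightarrow> prob_space.indep_set M
        (sets (vimage_algebra (space M) (\<lambda>\<omega>. \<lambda>i\<in>{1..N}. X0 N i \<omega>) (PiM {1..N} (\<lambda>_. borel))))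
        (sets (vimage_algebra (space M) (\<lambda>\<omega>. \<lambda>p\<in>{1..} \<times> {1..}. eps (fst p) (snd p) \<omega>)
                (PiM ({1..} \<times> {1..}) (\<lambda>_. borel))))"
begin

lemma indep_step:
  assumes N: "N \<ge> 1" and i: "i \<ge> 1"
  shows "indep_set (sigma_sets (space M) (G N ({1..} \<times> {1..n})))
           (sigma_sets (space M) {eps i (Suc n) -` B \<inter> space M | B. B \<in> sets (borel :: (real^'m) measure)})"
proof -
  define I :: "(nat \<times> nat) set" where "I = {1..} \<times> {1..}"
  define K0 :: "(nat \<times> nat) set" where "K0 = {1..} \<times> {1..n}"
  define Xv where "Xv = (\<lambda>\<omega>. \<lambda>i\<in>{1..N}. X0 N i \<omega>)"
  define Ev where "Ev = (\<lambda>\<omega>. \<lambda>p\<in>{1..} \<times> {1..}. eps (fst p) (snd p) \<omega>)"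
  define SX where "SX = sets (vimage_algebra (space M) Xv (PiM {1..N} (\<lambda>_. (borel :: (real^'d) measure))))"
  define SE where "SE = sets (vimage_algebra (space M) Ev (PiM ({1..} \<times> {1..}) (\<lambda>_. (borel :: (real^'m) measure))))"
  define E where "E = (\<lambda>p. sigma_sets (space M) {eps (fst p) (snd p) -` A \<inter> space M | A. A \<in> sets (borel :: (real^'m) measure)})"
  define Pe where "Pe = {eps i (Suc n) -` B \<inter> space M | B. B \<in> sets (borel :: (real^'m) measure)}"
  have init: "indep_set SX SE" unfolding SX_def SE_def Xv_def Ev_def using indep_init[OF N] .
  have saX: "sigma_algebra (space M) SX" unfolding SX_def by (rule sa_vimage)
  have saE: "sigma_algebra (space M) SE" unfolding SE_def by (rule sa_vimage)
  have genE: "{eps (fst p) (snd p) -` A \<inter> space M | A. A \<in> sets (borel :: (real^'m) measure)} \<subseteq> SE" if p: "p \<in> I" for p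
  proof safe
    fix A :: "(real^'m) set" assume A: "A \<in> sets borel"
    show "eps (fst p) (snd p) -` A \<inter> space M \<in> SE" unfolding SE_def
      by (rule vimage_comp_sets[where h="\<lambda>v. v p"]) (use p A in \<open>auto simp: Ev_def I_def space_PiM\<close>)
  qed
  have EsubE: "E p \<subseteq> SE" if "p \<in> I" for p
    unfolding E_def by (rule sigma_algebra.sigma_sets_subset[OF saE genE[OF that]])
  have E_Pow: "E p \<subseteq> Pow (space M)" for p
    unfolding E_def by (auto dest: sigma_sets_into_sp[rotated])
  have ind_all: "indep_sets E I"
  proof -
    have "indep_sets (\<lambda>p. sigma_sets (space M) {(\<lambda>(i, n). eps i n) p -` A \<inter> space M | A. A \<in> sets (borel :: (real^'m) measure)}) I"
      using eps_indep unfolding indep_vars_def I_def by simp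
    then show ?thesis unfolding E_def by (rule indep_sets_cong[THEN iffD1, rotated -1]) (auto simp: case_prod_beta)
  qed
  define II where "II = case_bool K0 {(i, Suc n)}"
  have UII: "(\<Union>j\<in>UNIV. II j) = K0 \<union> {(i, Suc n)}" by (auto simp: II_def UNIV_bool)
  have ind2: "indep_sets E (\<Union>j\<in>UNIV. II j)" unfolding UII
    by (rule indep_sets_mono_index[OF _ ind_all]) (use i in \<open>auto simp: K0_def I_def\<close>)
  have ind3: "indep_sets (\<lambda>j. sigma_sets (space M) (\<Union>p\<in>II j. E p)) UNIV"
  proof (rule indep_sets_collect_sigma[OF ind2])
    show "Int_stable (E p)" for p unfolding E_def by (rule sa_Int_stable[OF sigma_algebra_sigma_sets]) auto
    show "disjoint_family_on II UNIV" by (auto simp: disjoint_family_on_def II_def K0_def split: bool.split)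
  qed
  define T0 where "T0 = sigma_sets (space M) (\<Union>p\<in>K0. E p)"
  have i01: "indep_set T0 (sigma_sets (space M) (E (i, Suc n)))"
    unfolding indep_set_def T0_def
    by (rule indep_sets_cong[THEN iffD1, OF refl _ ind3]) (auto simp: II_def split: bool.split)
  have PeE: "Pe \<subseteq> sigma_sets (space M) (E (i, Suc n))"
    unfolding Pe_def E_def by auto
  have i01': "indep_set T0 Pe" by (rule indep_set_mono[OF i01 order_refl PeE])
  have T0E: "T0 \<subseteq> SE" unfolding T0_def
    by (rule sigma_algebra.sigma_sets_subset[OF saE]) (use EsubE in \<open>force simp: K0_def I_def\<close>)
  have PeSE: "Pe \<subseteq> SE" unfolding Pe_def using genE[of "(i, Suc n)"] i by (auto simp: I_def)
  have sa0: "sigma_algebra (space M) T0" unfolding T0_def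
    by (rule sigma_algebra_sigma_sets) (use E_Pow in auto)
  have stPe: "Int_stable Pe" unfolding Pe_def
  proof (rule Int_stableI)
    fix a b assume "a \<in> {eps i (Suc n) -` B \<inter> space M | B. B \<in> sets (borel :: (real^'m) measure)}"
      "b \<in> {eps i (Suc n) -` B \<inter> space M | B. B \<in> sets (borel :: (real^'m) measure)}"
    then obtain B B' where "a = eps i (Suc n) -` B \<inter> space M" "B \<in> sets borel"
      "b = eps i (Suc n) -` B' \<inter> space M" "B' \<in> sets borel" by auto
    then show "a \<inter> b \<in> {eps i (Suc n) -` B \<inter> space M | B. B \<in> sets (borel :: (real^'m) measure)}"
      by (intro CollectI exI[of _ "B \<inter> B'"]) auto
  qed
  have main: "indep_set (sigma_sets (space M) {a \<inter> b | a b. a \<in> SX \<and> b \<in> T0}) (sigma_sets (space M) Pe)"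
    by (rule indep_combine[OF init saX saE T0E PeSE i01' sa0 stPe])
  have GH: "G N K0 \<subseteq> {a \<inter> b | a b. a \<in> SX \<and> b \<in> T0}"
  proof
    fix S assume "S \<in> G N K0"
    then consider (a) i' B where "i' \<in> {1..N}" "B \<in> sets (borel :: (real^'d) measure)" "S = X0 N i' -` B \<inter> space M"
      | (b) p B where "p \<in> K0" "B \<in> sets (borel :: (real^'m) measure)" "S = eps (fst p) (snd p) -` B \<inter> space M"
      unfolding G_def by blast
    then show "S \<in> {a \<inter> b | a b. a \<in> SX \<and> b \<in> T0}"
    proof cases
      case a
      have "S \<in> SX" unfolding SX_def a(3)
        by (rule vimage_comp_sets[where h="\<lambda>v. v i'"]) (use a in \<open>auto simp: Xv_def space_PiM\<close>)
      moreover have "space M \<in> T0" unfolding T0_def by (rule sigma_sets_top)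
      moreover have "S = S \<inter> space M" using a by auto
      ultimately show ?thesis by blast
    next
      case b
      have "S \<in> E p" unfolding E_def b(3) using b by auto
      then have "S \<in> T0" unfolding T0_def using b(1) by auto
      moreover have "space M \<in> SX" unfolding SX_def using sets.top[of "vimage_algebra (space M) Xv (PiM {1..N} (\<lambda>_. (borel :: (real^'d) measure)))"] by simp
      moreover have "S = space M \<inter> S" using b by auto
      ultimately show ?thesis by blast
    qed
  qed
  show ?thesis
    by (rule indep_set_mono[OF main]) (use GH in \<open>auto simp: K0_def Pe_def intro: sigma_sets_mono'[THEN subsetD]\<close>)
qed

end


lemma (in prob_space) nn_lin:
  fixes e0 :: "'a \<Rightarrow> real" and e :: "nat \<Rightarrow> 'a \<Rightarrow> real"
  assumes S: "finite S" and c: "c \<ge> 0" and d: "d \<ge> 0" and K: "K \<ge> 0" and B: "B \<ge> 0"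
    and e0: "\<And>\<omega>. e0 \<omega> \<ge> 0" "e0 \<in> borel_measurable M" "(\<integral>\<^sup>+\<omega>. ennreal (e0 \<omega>) \<partial>M) \<le> ennreal B"
    and e: "\<And>k \<omega>. e k \<omega> \<ge> 0" "\<And>k. k \<in> S \<Longrightarrow> e k \<in> borel_measurable M"
       "\<And>k. k \<in> S \<Longrightarrow> (\<integral>\<^sup>+\<omega>. ennreal (e k \<omega>) \<partial>M) \<le> ennreal B"
  shows "(\<integral>\<^sup>+\<omega>. ennreal (c * e0 \<omega> + (\<Sum>k\<in>S. d * e k \<omega>) + K) \<partial>M) \<le> ennreal (c * B + real (card S) * d * B + K)"
proof -
  have eq: "ennreal (c * e0 \<omega> + (\<Sum>k\<in>S. d * e k \<omega>) + K)
      = ennreal c * ennreal (e0 \<omega>) + (\<Sum>k\<in>S. ennreal d * ennreal (e k \<omega>)) + ennreal K" for \<omega>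
  proof -
    have "ennreal (c * e0 \<omega> + (\<Sum>k\<in>S. d * e k \<omega>) + K) = ennreal (c * e0 \<omega>) + ennreal (\<Sum>k\<in>S. d * e k \<omega>) + ennreal K"
      using c d K e0(1) e(1) by (simp add: ennreal_plus sum_nonneg)
    also have "ennreal (\<Sum>k\<in>S. d * e k \<omega>) = (\<Sum>k\<in>S. ennreal (d * e k \<omega>))"
      using d e(1) by (simp add: sum_ennreal)
    finally show ?thesis using c d e0(1) e(1) by (simp add: ennreal_mult)
  qed
  have "(\<integral>\<^sup>+\<omega>. ennreal (c * e0 \<omega> + (\<Sum>k\<in>S. d * e k \<omega>) + K) \<partial>M)
      = (\<integral>\<^sup>+\<omega>. ennreal c * ennreal (e0 \<omega>) + (\<Sum>k\<in>S. ennreal d * ennreal (e k \<omega>)) + ennreal K \<partial>M)"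
    by (simp only: eq)
  also have "\<dots> = (\<integral>\<^sup>+\<omega>. ennreal c * ennreal (e0 \<omega>) \<partial>M) + (\<integral>\<^sup>+\<omega>. (\<Sum>k\<in>S. ennreal d * ennreal (e k \<omega>)) \<partial>M) + (\<integral>\<^sup>+\<omega>. ennreal K \<partial>M)"
    using e0(2) e(2) by (simp add: nn_integral_add)
  also have "(\<integral>\<^sup>+\<omega>. ennreal c * ennreal (e0 \<omega>) \<partial>M) = ennreal c * (\<integral>\<^sup>+\<omega>. ennreal (e0 \<omega>) \<partial>M)"
    using e0(2) by (simp add: nn_integral_cmult)
  also have "(\<integral>\<^sup>+\<omega>. (\<Sum>k\<in>S. ennreal d * ennreal (e k \<omega>)) \<partial>M) = (\<Sum>k\<in>S. ennreal d * (\<integral>\<^sup>+\<omega>. ennreal (e k \<omega>) \<partial>M))"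
    using e(2) by (simp add: nn_integral_sum nn_integral_cmult)
  also have "(\<integral>\<^sup>+\<omega>. ennreal K \<partial>M) = ennreal K" by (simp add: emeasure_space_1)
  also have "ennreal c * (\<integral>\<^sup>+\<omega>. ennreal (e0 \<omega>) \<partial>M) + (\<Sum>k\<in>S. ennreal d * (\<integral>\<^sup>+\<omega>. ennreal (e k \<omega>) \<partial>M)) + ennreal K
      \<le> ennreal c * ennreal B + (\<Sum>k\<in>S. ennreal d * ennreal B) + ennreal K"
    by (intro add_mono mult_left_mono sum_mono e0(3) e(3) order_refl) auto
  also have "\<dots> = ennreal (c * B + real (card S) * d * B + K)"
    using c d B K by (simp add: ennreal_plus ennreal_mult[symmetric] ennreal_of_nat_eq_real_of_nat mult.assoc)
  finally show ?thesis .
qed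



context PS begin

lemma f0_meas: "(\<lambda>z. f 0 (return borel 0) z) \<in> borel_measurable borel"
proof -
  have r: "return borel (0::real^'d) \<in> space (restrict_space (subprob_algebra borel) P1)"
    using ret_P1 by (auto simp: space_restrict_space space_subprob_algebra subprob_space_return)
  have "(\<lambda>z::real^'m. ((0::real^'d), return borel (0::real^'d), z)) \<in> measurable borel (borel \<Otimes>\<^sub>M (restrict_space (subprob_algebra borel) P1 \<Otimes>\<^sub>M borel))"
    by (intro measurable_Pair measurable_const r measurable_ident_sets refl) simp
  from measurable_compose[OF this f_meas] show ?thesis by simp
qed

lemma D1_meas: "(\<lambda>z. D1 f z) \<in> borel_measurable borel"
  unfolding D1_def using measurable_compose[OF f0_meas borel_measurable_norm] by simp

end



context PS2 begin

lemma step_bound: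
  fixes \<theta> :: "(real^'m) measure" and \<omega>' Mc \<beta> a b \<rho> \<eta> K B C :: real
  assumes eps_law: "\<And>i n. i \<ge> 1 \<Longrightarrow> n \<ge> 1 \<Longrightarrow> distr M borel (eps i n) = \<theta>"
    and A3: "onorm (\<lambda>x. A *v x) \<le> exp (-\<omega>')"
    and Mc: "Mc \<ge> 0" and Dl: "AE z in \<theta>. Dlip f z \<le> ennreal Mc"
    and \<delta>: "\<delta> \<ge> 0" and \<beta>: "\<beta> \<ge> 0"
    and a: "a = exp (-\<omega>') + \<delta> * Mc" and b: "b = \<delta> * Mc" and \<rho>: "\<rho> = a + b"
    and Y: "\<And>t. t \<ge> 0 \<Longrightarrow> exp (\<rho> * t) \<le> \<eta> * exp t + K" and \<eta>: "\<eta> \<ge> 0" and K: "K \<ge> 0" and B: "B \<ge> 0"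
    and Cw: "(\<integral>\<^sup>+ z. ennreal (exp (\<beta> * \<delta> * D1 f z)) \<partial>\<theta>) \<le> ennreal C"
    and Cnn: "C \<ge> 0" and N: "N \<ge> 1" and i: "i \<in> {1..N}"
    and IH: "\<And>j. j \<in> {1..N} \<Longrightarrow> (\<integral>\<^sup>+\<omega>. ennreal (exp (\<beta> * norm (particle A \<delta> f X0 eps N n j \<omega>))) \<partial>M) \<le> ennreal B"
  shows "(\<integral>\<^sup>+\<omega>. ennreal (exp (\<beta> * norm (particle A \<delta> f X0 eps N (Suc n) i \<omega>))) \<partial>M) \<le> ennreal ((\<eta> * B + K) * C)"
proof -
  have ab: "a \<ge> 0" "b \<ge> 0" "a + b = \<rho>" "\<rho> > 0"
  proof -
    have "0 \<le> \<delta> * Mc" using Mc \<delta> by simp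
    moreover have "0 < exp (-\<omega>')" by simp
    ultimately show "a \<ge> 0" "b \<ge> 0" "a + b = \<rho>" "\<rho> > 0" using a b \<rho> by linarith+
  qed
  define xk where "xk k \<omega> = particle A \<delta> f X0 eps N n k \<omega>" for k \<omega>
  define e where "e k \<omega> = exp (\<beta> * norm (xk k \<omega>))" for k \<omega>
  define u where "u \<omega> = \<eta> * (a/\<rho>) * e i \<omega> + (\<Sum>k\<in>{1..N}. (\<eta> * (b/\<rho>) / real N) * e k \<omega>) + K" for \<omega>
  define w where "w \<omega> = exp (\<beta> * \<delta> * D1 f (eps i (Suc n) \<omega>))" for \<omega>
  have i1: "i \<ge> 1" using i by simp
  have epsm: "eps i (Suc n) \<in> borel_measurable M" using eps_meas[OF i1] by simp
  have AEz: "AE \<omega> in M. Dlip f (eps i (Suc n) \<omega>) \<le> ennreal Mc"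
  proof (rule AE_distrD[OF epsm])
    have law: "distr M borel (eps i (Suc n)) = \<theta>" using eps_law[OF i1, of "Suc n"] by simp
    show "AE z in distr M borel (eps i (Suc n)). Dlip f z \<le> ennreal Mc" unfolding law by (rule Dl)
  qed
  have pw: "exp (\<beta> * norm (particle A \<delta> f X0 eps N (Suc n) i \<omega>)) \<le> u \<omega> * w \<omega>"
    if Dz: "Dlip f (eps i (Suc n) \<omega>) \<le> ennreal Mc" for \<omega>
  proof -
    define x where "x = xk i \<omega>"
    define z where "z = eps i (Suc n) \<omega>"
    define avg where "avg = (\<Sum>j\<in>{1..N}. norm (xk j \<omega>)) / real N"
    have s1: "norm (particle A \<delta> f X0 eps N (Suc n) i \<omega>) \<le> norm (A *v x) + \<delta> * norm (f x (empirical N (\<lambda>j. xk j \<omega>)) z)"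
      using norm_triangle_ineq[of "A *v x" "\<delta> *\<^sub>R f x (empirical N (\<lambda>j. xk j \<omega>)) z"] \<delta>
      by (simp add: x_def z_def xk_def)
    have s2: "norm (A *v x) \<le> exp (-\<omega>') * norm x"
    proof -
      have "norm (A *v x) \<le> onorm (\<lambda>x. A *v x) * norm x"
        by (rule onorm) simp
      also have "\<dots> \<le> exp (-\<omega>') * norm x" by (intro mult_right_mono A3) simp
      finally show ?thesis .
    qed
    have s3: "norm (f x (empirical N (\<lambda>j. xk j \<omega>)) z) \<le> Mc * (norm x + avg) + D1 f z"
      unfolding avg_def by (rule f_bound[OF _ Mc N]) (use Dz in \<open>simp add: z_def\<close>)
    have s: "norm (particle A \<delta> f X0 eps N (Suc n) i \<omega>) \<le> a * norm x + b * avg + \<delta> * D1 f z"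
    proof -
      have "\<delta> * norm (f x (empirical N (\<lambda>j. xk j \<omega>)) z) \<le> \<delta> * (Mc * (norm x + avg) + D1 f z)"
        by (rule mult_left_mono[OF s3 \<delta>])
      then show ?thesis using s1 s2 unfolding a b by (simp add: algebra_simps)
    qed
    have "exp (\<beta> * norm (particle A \<delta> f X0 eps N (Suc n) i \<omega>))
       \<le> (\<eta> * ((a/\<rho>) * exp (\<beta> * norm x) + (b/\<rho>) * ((\<Sum>j\<in>{1..N}. exp (\<beta> * norm (xk j \<omega>))) / real N)) + K) * exp (\<beta> * \<delta> * D1 f z)"
      by (rule pointwise[OF N s[unfolded avg_def] ab \<beta> Y \<eta>])
    also have "(\<eta> * ((a/\<rho>) * exp (\<beta> * norm x) + (b/\<rho>) * ((\<Sum>j\<in>{1..N}. exp (\<beta> * norm (xk j \<omega>))) / real N)) + K) = u \<omega>"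
      unfolding u_def e_def x_def by (simp add: algebra_simps sum_distrib_left sum_divide_distrib)
    finally show ?thesis unfolding w_def z_def .
  qed
  have e_nn: "e k \<omega> \<ge> 0" for k \<omega> unfolding e_def by simp
  have u_nn: "u \<omega> \<ge> 0" for \<omega> unfolding u_def using \<eta> ab K e_nn
    by (intro add_nonneg_nonneg mult_nonneg_nonneg sum_nonneg divide_nonneg_nonneg) auto
  have w_nn: "w \<omega> \<ge> 0" for \<omega> unfolding w_def by simp
  have xkF: "(\<lambda>\<omega>. xk k \<omega>) \<in> borel_measurable (FF N ({1..} \<times> {1..n}))" if "k \<in> {1..N}" for k
    unfolding xk_def by (rule particle_meas[OF N _ that]) simp
  have xkM: "(\<lambda>\<omega>. xk k \<omega>) \<in> borel_measurable M" if "k \<in> {1..N}" for k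
    unfolding xk_def by (rule particle_meas_M[OF N that])
  have ekF: "e k \<in> borel_measurable (FF N ({1..} \<times> {1..n}))" if "k \<in> {1..N}" for k
    unfolding e_def using xkF[OF that] by measurable
  have ekM: "e k \<in> borel_measurable M" if "k \<in> {1..N}" for k
    unfolding e_def using xkM[OF that] by measurable
  have uF: "(\<lambda>\<omega>. ennreal (u \<omega>)) \<in> borel_measurable (FF N ({1..} \<times> {1..n}))"
    unfolding u_def using ekF i by (intro measurable_compose[OF _ measurable_ennreal] borel_measurable_add borel_measurable_times borel_measurable_const borel_measurable_sum) auto
  have uM: "(\<lambda>\<omega>. ennreal (u \<omega>)) \<in> borel_measurable M"
    unfolding u_def using ekM i by (intro measurable_compose[OF _ measurable_ennreal] borel_measurable_add borel_measurable_times borel_measurable_const borel_measurable_sum) auto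
  define h where "h z = ennreal (exp (\<beta> * \<delta> * D1 f z))" for z
  have hm: "h \<in> borel_measurable borel" unfolding h_def using D1_meas by measurable
  have wM: "(\<lambda>\<omega>. ennreal (w \<omega>)) \<in> borel_measurable M"
    using measurable_compose[OF epsm hm] unfolding w_def h_def by simp
  have step1: "(\<integral>\<^sup>+\<omega>. ennreal (exp (\<beta> * norm (particle A \<delta> f X0 eps N (Suc n) i \<omega>))) \<partial>M)
      \<le> (\<integral>\<^sup>+\<omega>. ennreal (u \<omega>) * ennreal (w \<omega>) \<partial>M)"
  proof (rule nn_integral_mono_AE)
    show "AE \<omega> in M. ennreal (exp (\<beta> * norm (particle A \<delta> f X0 eps N (Suc n) i \<omega>))) \<le> ennreal (u \<omega>) * ennreal (w \<omega>)"
      using AEz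
    proof eventually_elim
      case (elim \<omega>)
      have "ennreal (exp (\<beta> * norm (particle A \<delta> f X0 eps N (Suc n) i \<omega>))) \<le> ennreal (u \<omega> * w \<omega>)"
        by (rule ennreal_leI[OF pw[OF elim]])
      also have "\<dots> = ennreal (u \<omega>) * ennreal (w \<omega>)" using u_nn[of \<omega>] w_nn[of \<omega>] by (rule ennreal_mult)
      finally show ?case .
    qed
  qed
  have fac: "(\<integral>\<^sup>+\<omega>. ennreal (u \<omega>) * ennreal (w \<omega>) \<partial>M) = (\<integral>\<^sup>+\<omega>. ennreal (u \<omega>) \<partial>M) * (\<integral>\<^sup>+\<omega>. ennreal (w \<omega>) \<partial>M)"
  proof (rule indep_factor[OF indep_step[OF N i1, of n] _ _ uM wM])
    show "sigma_algebra (space M) (sigma_sets (space M) (G N ({1..} \<times> {1..n})))"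
      by (rule sigma_algebra_sigma_sets[OF G_Pow])
    show "sigma_algebra (space M) (sigma_sets (space M) {eps i (Suc n) -` B \<inter> space M | B. B \<in> sets (borel :: (real^'m) measure)})"
      by (rule sigma_algebra_sigma_sets) auto
  next
    fix S :: "ennreal set" assume S: "S \<in> sets borel"
    have "(\<lambda>\<omega>. ennreal (u \<omega>)) -` S \<inter> space (FF N ({1..} \<times> {1..n})) \<in> sets (FF N ({1..} \<times> {1..n}))"
      by (rule measurable_sets[OF uF S])
    then show "(\<lambda>\<omega>. ennreal (u \<omega>)) -` S \<inter> space M \<in> sigma_sets (space M) (G N ({1..} \<times> {1..n}))"
      by (simp add: sets_F)
    have "(\<lambda>\<omega>. ennreal (w \<omega>)) -` S \<inter> space M = eps i (Suc n) -` (h -` S \<inter> space borel) \<inter> space M"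
      unfolding w_def h_def by auto
    moreover have "h -` S \<inter> space borel \<in> sets borel" by (rule measurable_sets[OF hm S])
    ultimately show "(\<lambda>\<omega>. ennreal (w \<omega>)) -` S \<inter> space M \<in> sigma_sets (space M) {eps i (Suc n) -` B \<inter> space M | B. B \<in> sets (borel :: (real^'m) measure)}"
      by auto
  qed
  have IHe: "(\<integral>\<^sup>+\<omega>. ennreal (e k \<omega>) \<partial>M) \<le> ennreal B" if "k \<in> {1..N}" for k
    unfolding e_def xk_def by (rule IH[OF that])
  have ubound: "(\<integral>\<^sup>+\<omega>. ennreal (u \<omega>) \<partial>M) \<le> ennreal (\<eta> * B + K)"
  proof -
    have "(\<integral>\<^sup>+\<omega>. ennreal (u \<omega>) \<partial>M) \<le> ennreal ((\<eta> * (a/\<rho>)) * B + real (card {1..N}) * (\<eta> * (b/\<rho>) / real N) * B + K)"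
      unfolding u_def
      by (rule nn_lin) (use \<eta> ab K B e_nn ekM IHe i in auto)
    also have "(\<eta> * (a/\<rho>)) * B + real (card {1..N}) * (\<eta> * (b/\<rho>) / real N) * B + K = \<eta> * B + K"
      using N ab by (simp add: field_simps) (simp add: ab(3)[symmetric] algebra_simps)
    finally show ?thesis .
  qed
  have wbound: "(\<integral>\<^sup>+\<omega>. ennreal (w \<omega>) \<partial>M) \<le> ennreal C"
  proof -
    have law: "distr M borel (eps i (Suc n)) = \<theta>" using eps_law[OF i1, of "Suc n"] by simp
    have "(\<integral>\<^sup>+\<omega>. ennreal (w \<omega>) \<partial>M) = (\<integral>\<^sup>+\<omega>. h (eps i (Suc n) \<omega>) \<partial>M)"
      unfolding w_def h_def ..
    also have "\<dots> = (\<integral>\<^sup>+z. h z \<partial>distr M borel (eps i (Suc n)))"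
      by (rule nn_integral_distr[OF epsm, symmetric]) (simp add: hm)
    also have "\<dots> = (\<integral>\<^sup>+ z. ennreal (exp (\<beta> * \<delta> * D1 f z)) \<partial>\<theta>)" unfolding law h_def ..
    finally show ?thesis using Cw by simp
  qed
  have "(\<integral>\<^sup>+\<omega>. ennreal (exp (\<beta> * norm (particle A \<delta> f X0 eps N (Suc n) i \<omega>))) \<partial>M)
      \<le> ennreal (\<eta> * B + K) * ennreal C"
  proof -
    have "(\<integral>\<^sup>+\<omega>. ennreal (u \<omega>) \<partial>M) * (\<integral>\<^sup>+\<omega>. ennreal (w \<omega>) \<partial>M) \<le> ennreal (\<eta> * B + K) * ennreal C"
      by (rule mult_mono[OF ubound wbound]) auto
    then show ?thesis using step1 fac by simp
  qed
  also have "\<dots> = ennreal ((\<eta> * B + K) * C)"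
    using \<eta> B K Cnn by (simp add: ennreal_mult[symmetric] ennreal_plus[symmetric] del: ennreal_plus)
  finally show ?thesis .
qed

end


theorem lemma4p6:
  fixes M :: "'a measure"
    and A :: "real^'d^'d" and \<delta> \<omega> Mc \<alpha> \<alpha>0 c2 \<gamma>0 :: real
    and \<theta> :: "(real^'m) measure" and \<mu>0 :: "(real^'d) measure"
    and f :: "real^'d \<Rightarrow> (real^'d) measure \<Rightarrow> real^'m \<Rightarrow> real^'d"
    and X0 :: "nat \<Rightarrow> nat \<Rightarrow> 'a \<Rightarrow> real^'d"
    and eps :: "nat \<Rightarrow> nat \<Rightarrow> 'a \<Rightarrow> real^'m"
  assumes M: "prob_space M"
    and theta: "prob_space \<theta>" "sets \<theta> = sets borel"
    and mu0: "\<mu>0 \<in> P1"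
    and f_meas: "(\<lambda>(x, \<mu>, z). f x \<mu> z) \<in>
        measurable (borel \<Otimes>\<^sub>M (restrict_space (subprob_algebra borel) P1 \<Otimes>\<^sub>M borel)) borel"
    and X0_meas: "\<And>N i. N \<ge> 1 \<Longrightarrow> i \<in> {1..N} \<Longrightarrow> X0 N i \<in> borel_measurable M"
    and X0_law: "\<And>N i. N \<ge> 1 \<Longrightarrow> i \<in> {1..N} \<Longrightarrow> distr M borel (X0 N i) = \<mu>0"
    and X0_exch: "\<And>N \<pi>. N \<ge> 1 \<Longrightarrow> \<pi> permutes {1..N} \<Longrightarrow>
        distr M (PiM {1..N} (\<lambda>_. borel)) (\<lambda>\<omega>. \<lambda>i\<in>{1..N}. X0 N (\<pi> i) \<omega>)
      = distr M (PiM {1..N} (\<lambda>_. borel)) (\<lambda>\<omega>. \<lambda>i\<in>{1..N}. X0 N i \<omega>)"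
    and eps_meas: "\<And>i n. i \<ge> 1 \<Longrightarrow> n \<ge> 1 \<Longrightarrow> eps i n \<in> borel_measurable M"
    and eps_law: "\<And>i n. i \<ge> 1 \<Longrightarrow> n \<ge> 1 \<Longrightarrow> distr M borel (eps i n) = \<theta>"
    and eps_indep: "prob_space.indep_vars M (\<lambda>_. borel) (\<lambda>(i, n). eps i n) ({1..} \<times> {1..})"
    and indep_init: "\<And>N. N \<ge> 1 \<Longrightarrow> prob_space.indep_set M
        (sets (vimage_algebra (space M) (\<lambda>\<omega>. \<lambda>i\<in>{1..N}. X0 N i \<omega>) (PiM {1..N} (\<lambda>_. borel))))
        (sets (vimage_algebra (space M) (\<lambda>\<omega>. \<lambda>p\<in>{1..} \<times> {1..}. eps (fst p) (snd p) \<omega>)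
                (PiM ({1..} \<times> {1..}) (\<lambda>_. borel))))"
    \<comment> \<open>(A3)\<close>
    and A3: "\<omega> > 0" "onorm (\<lambda>x. A *v x) \<le> exp (-\<omega>)"
    \<comment> \<open>(A6)\<close>
    and A6i: "Mc > 1" "AE z in \<theta>. Dlip f z \<le> ennreal Mc"
    and A6ii: "\<alpha> > 0" "integrable \<mu>0 (\<lambda>x. exp (\<alpha> * norm x))"
              "integrable \<theta> (\<lambda>z. exp (\<alpha> * D1 f z))"
    and alpha0: "0 < \<alpha>0" "\<alpha>0 \<le> \<alpha>"
    and c2: "0 < c2"
    and c2_bound: "\<And>\<alpha>1. \<alpha>1 \<in> {0..\<alpha>0} \<Longrightarrow> (\<integral>z. exp (\<alpha>1 * D1 f z) \<partial>\<theta>) \<le> exp (c2 * \<alpha>1)"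
    and gamma0: "0 < \<gamma>0" "ereal \<gamma>0 < a0 \<omega> f \<theta>"
    and delta: "0 \<le> \<delta>" "ereal \<delta> < a0 \<omega> f \<theta> - ereal \<gamma>0"
               "\<delta> < (1 - exp (-\<omega>)) / (2 * Mc)"
  shows "\<forall>\<alpha>1\<in>{0..\<alpha>0}.
     (SUP n. SUP N\<in>{1..}. \<integral>\<^sup>+ \<omega>'. ennreal (exp (\<alpha>1 * norm (particle A \<delta> f X0 eps N n 1 \<omega>'))) \<partial>M) < \<infinity>"
proof -
  interpret PS2 M A \<delta> f X0 eps
    apply (intro PS2.intro PS.intro PS2_axioms.intro)
    apply (rule M)
    apply (rule f_meas)
    apply (erule X0_meas, assumption)
    apply (erule eps_meas, assumption)
    apply (rule eps_indep)
    apply (erule indep_init)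
    done
  note mu0P = mu0[unfolded P1_def]
  have smu0: "sets \<mu>0 = sets borel" using mu0P by simp
  interpret mu0p: prob_space \<mu>0 using mu0P by simp
  interpret th: prob_space \<theta> by (rule theta(1))
  show ?thesis
  proof
    fix \<beta> assume \<beta>: "\<beta> \<in> {0..\<alpha>0}"
    have \<beta>0: "\<beta> \<ge> 0" and \<beta>1: "\<beta> \<le> \<alpha>0" using \<beta> by auto
    have Mc0: "Mc > 0" using A6i(1) by simp
    have e0: "0 < exp (-\<omega>)" "exp (-\<omega>) < 1" using A3(1) by auto
    have d2: "2 * Mc * \<delta> < 1 - exp (-\<omega>)"
      using delta(3) Mc0 by (simp add: field_simps)
    have d1: "\<delta> \<le> 1"
    proof -
      have "2 * Mc * \<delta> < 1" using d2 e0 by linarith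
      moreover have "2 * Mc * \<delta> \<ge> 2 * 1 * \<delta>" using A6i(1) delta(1) by (intro mult_right_mono) auto
      ultimately show ?thesis by linarith
    qed
    define a where "a = exp (-\<omega>) + \<delta> * Mc"
    define b where "b = \<delta> * Mc"
    define \<rho> where "\<rho> = a + b"
    have \<rho>0: "0 < \<rho>" "\<rho> < 1" unfolding \<rho>_def a_def b_def using d2 e0 delta(1) Mc0
      by (auto simp: algebra_simps intro: add_pos_nonneg)
    define C where "C = exp (c2 * (\<beta> * \<delta>))"
    have C1: "C \<ge> 1" unfolding C_def using c2 \<beta>0 delta(1) by simp
    define \<eta> where "\<eta> = 1 / (2 * C)"
    define K where "K = exp (\<rho> * (ln (2 * C) / (1 - \<rho>)))"
    have \<eta>0: "\<eta> \<ge> 0" unfolding \<eta>_def using C1 by simp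
    have K0: "K \<ge> 0" unfolding K_def by simp
    have Y: "exp (\<rho> * t) \<le> \<eta> * exp t + K" if "t \<ge> 0" for t
      using young_exp[OF C1 \<rho>0 that] unfolding \<eta>_def K_def by simp
    have bd: "\<beta> * \<delta> \<in> {0..\<alpha>0}"
    proof -
      have "\<beta> * \<delta> \<le> \<beta> * 1" using \<beta>0 d1 by (intro mult_left_mono)
      then show ?thesis using \<beta>0 \<beta>1 delta(1) by auto
    qed
    have D1m: "(\<lambda>z. D1 f z) \<in> borel_measurable \<theta>"
      using D1_meas by (simp add: measurable_cong_sets[OF theta(2) refl])
    have intw: "integrable \<theta> (\<lambda>z. exp (\<beta> * \<delta> * D1 f z))"
    proof (rule Bochner_Integration.integrable_bound[OF A6ii(3)])
      show "(\<lambda>z. exp (\<beta> * \<delta> * D1 f z)) \<in> borel_measurable \<theta>" using D1m by measurable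
      show "AE z in \<theta>. norm (exp (\<beta> * \<delta> * D1 f z)) \<le> norm (exp (\<alpha> * D1 f z))"
      proof (rule AE_I2)
        fix z
        have "D1 f z \<ge> 0" unfolding D1_def by simp
        moreover have "\<beta> * \<delta> \<le> \<alpha>" using bd alpha0(2) by auto
        ultimately have "\<beta> * \<delta> * D1 f z \<le> \<alpha> * D1 f z" by (intro mult_right_mono)
        then show "norm (exp (\<beta> * \<delta> * D1 f z)) \<le> norm (exp (\<alpha> * D1 f z))" by simp
      qed
    qed
    have Cw: "(\<integral>\<^sup>+ z. ennreal (exp (\<beta> * \<delta> * D1 f z)) \<partial>\<theta>) \<le> ennreal C"
    proof -
      have "(\<integral>\<^sup>+ z. ennreal (exp (\<beta> * \<delta> * D1 f z)) \<partial>\<theta>) = ennreal (\<integral> z. exp (\<beta> * \<delta> * D1 f z) \<partial>\<theta>)"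
        by (rule nn_integral_eq_integral[OF intw]) simp
      also have "\<dots> \<le> ennreal C" unfolding C_def using c2_bound[OF bd] by (intro ennreal_leI) simp
      finally show ?thesis .
    qed
    define B0 where "B0 = (\<integral> x. exp (\<alpha> * norm x) \<partial>\<mu>0)"
    define B where "B = max B0 (2 * C * K)"
    have B0: "B \<ge> 0"
    proof -
      have "0 \<le> 2 * C * K" using C1 K0 by simp
      then show ?thesis unfolding B_def by linarith
    qed
    have claim: "\<forall>j\<in>{1..N}. (\<integral>\<^sup>+\<omega>'. ennreal (exp (\<beta> * norm (particle A \<delta> f X0 eps N n j \<omega>'))) \<partial>M) \<le> ennreal B"
      if N: "N \<ge> 1" for N n
    proof (induction n)
      case 0
      show ?case
      proof
        fix j assume j: "j \<in> {1..N}"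
        have Xm: "X0 N j \<in> borel_measurable M" by (rule X0_meas[OF N j])
        have gm: "(\<lambda>x::real^'d. ennreal (exp (\<beta> * norm x))) \<in> borel_measurable borel" by measurable
        have "(\<integral>\<^sup>+\<omega>'. ennreal (exp (\<beta> * norm (particle A \<delta> f X0 eps N 0 j \<omega>'))) \<partial>M)
            = (\<integral>\<^sup>+\<omega>'. ennreal (exp (\<beta> * norm (X0 N j \<omega>'))) \<partial>M)" by simp
        also have "\<dots> = (\<integral>\<^sup>+x. ennreal (exp (\<beta> * norm x)) \<partial>distr M borel (X0 N j))"
          by (rule nn_integral_distr[OF Xm, symmetric]) (simp add: gm)
        also have "\<dots> = (\<integral>\<^sup>+x. ennreal (exp (\<beta> * norm x)) \<partial>\<mu>0)" using X0_law[OF N j] by simp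
        also have "\<dots> \<le> (\<integral>\<^sup>+x. ennreal (exp (\<alpha> * norm x)) \<partial>\<mu>0)"
        proof (rule nn_integral_mono)
          fix x :: "real^'d"
          have "\<beta> * norm x \<le> \<alpha> * norm x" using \<beta>1 alpha0(2) by (intro mult_right_mono) auto
          then show "ennreal (exp (\<beta> * norm x)) \<le> ennreal (exp (\<alpha> * norm x))" by (intro ennreal_leI) simp
        qed
        also have "\<dots> = ennreal B0" unfolding B0_def
          by (rule nn_integral_eq_integral[OF A6ii(2)]) simp
        also have "\<dots> \<le> ennreal B" unfolding B_def by (intro ennreal_leI) simp
        finally show "(\<integral>\<^sup>+\<omega>'. ennreal (exp (\<beta> * norm (particle A \<delta> f X0 eps N 0 j \<omega>'))) \<partial>M) \<le> ennreal B" .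
      qed
    next
      case (Suc n)
      show ?case
      proof
        fix j assume j: "j \<in> {1..N}"
        have "(\<integral>\<^sup>+\<omega>'. ennreal (exp (\<beta> * norm (particle A \<delta> f X0 eps N (Suc n) j \<omega>'))) \<partial>M) \<le> ennreal ((\<eta> * B + K) * C)"
          by (rule step_bound[OF eps_law A3(2) _ A6i(2) delta(1) \<beta>0 a_def b_def \<rho>_def Y \<eta>0 K0 B0 Cw _ N j])
             (use Suc.IH Mc0 C1 in auto)
        also have "\<dots> \<le> ennreal B"
        proof (intro ennreal_leI)
          have "(\<eta> * B + K) * C = B / 2 + K * C" unfolding \<eta>_def using C1 by (simp add: field_simps)
          also have "\<dots> \<le> B"
          proof -
            have "2 * C * K \<le> B" unfolding B_def by simp
            then show ?thesis by (simp add: algebra_simps)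
          qed
          finally show "(\<eta> * B + K) * C \<le> B" .
        qed
        finally show "(\<integral>\<^sup>+\<omega>'. ennreal (exp (\<beta> * norm (particle A \<delta> f X0 eps N (Suc n) j \<omega>'))) \<partial>M) \<le> ennreal B" .
      qed
    qed
    have "(SUP n. SUP N\<in>{1..}. \<integral>\<^sup>+ \<omega>'. ennreal (exp (\<beta> * norm (particle A \<delta> f X0 eps N n 1 \<omega>'))) \<partial>M) \<le> ennreal B"
    proof (intro SUP_least)
      fix n N :: nat assume "N \<in> {1..}"
      then have N: "N \<ge> 1" by simp
      then show "(\<integral>\<^sup>+ \<omega>'. ennreal (exp (\<beta> * norm (particle A \<delta> f X0 eps N n 1 \<omega>'))) \<partial>M) \<le> ennreal B"
        using claim[OF N, of n] by auto
    qed
    also have "\<dots> < \<infinity>" by simp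
    finally show "(SUP n. SUP N\<in>{1..}. \<integral>\<^sup>+ \<omega>'. ennreal (exp (\<beta> * norm (particle A \<delta> f X0 eps N n 1 \<omega>'))) \<partial>M) < \<infinity>" .
  qed
qed


end
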